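(* Let $n\ge 2$ and let $D$ be an $n\times n$ unit spherical Euclidean distance matrix (EDM) of embedding dimension $r$ such that every off-diagonal entry of $D$ is $\ge 2$. Define $\Delta$ by $D = 2(E-I)+2\Delta$ and let $w\in\mathbb{R}^n$ satisfy $Dw=e$. If $\Delta$ is irreducible, then $r=n-1$ (i.e., $D$ is the EDM of a simplex) and $w>\mathbf{0}$ (every entry of $w$ is positive).
   Context: $e$ denotes the all-ones vector in $\mathbb{R}^n$, $E$ the $n\times n$ all-ones matrix, $I$ the identity matrix. An $n\times n$ matrix $D=(d_{ij})$ is a Euclidean distance matrix (EDM) if there exist points $p^1,\dots,p^n$ in some Euclidean space with $d_{ij}=\|p^i-p^j\|^2$; the dimension of the affine span of these points is the embedding dimension of $D$; $D$ is the EDM of a simplex if its embedding dimension is $n-1$. $D$ is a unit spherical EDM if such points can be chosen on a sphere of radius $1$. A nonnegative $n\times n$ matrix $A$ is reducible if $A$ is the $1\times 1$ zero matrix, or $n\ge 2$ and there is a permutation matrix $Q$ with $QAQ^T=\begin{pmatrix}A_{11}&A_{12}\\ \mathbf{0}&A_{22}\end{pmatrix}$ with $A_{11},A_{22}$ square; otherwise $A$ is irreducible. *)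

theory Defs
  imports "HOL-Analysis.Analysis"
begin

text \<open>Points realizing an EDM are taken in real^'n: any n points of any Euclidean space
  (and any sphere through them) embed isometrically into R^n, so this is no restriction.\<close>

definition realizes_edm :: "('n::finite \<Rightarrow> real ^ 'n) \<Rightarrow> real ^ 'n ^ 'n \<Rightarrow> bool" where
  "realizes_edm p D \<longleftrightarrow> (\<forall>i j. D $ i $ j = (norm (p i - p j))\<^sup>2)"

definition is_edm :: "real ^ 'n ^ 'n \<Rightarrow> bool" where
  "is_edm D \<longleftrightarrow> (\<exists>p :: 'n::finite \<Rightarrow> real ^ 'n. realizes_edm p D)"

definition is_unit_spherical_edm :: "real ^ 'n ^ 'n \<Rightarrow> bool" where
  "is_unit_spherical_edm D \<longleftrightarrow>
     (\<exists>(p :: 'n::finite \<Rightarrow> real ^ 'n) c. realizes_edm p D \<and> (\<forall>i. dist c (p i) = 1))"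

definition edm_embedding_dim :: "real ^ 'n ^ 'n \<Rightarrow> int" where
  "edm_embedding_dim D = aff_dim (range (SOME p :: 'n::finite \<Rightarrow> real ^ 'n. realizes_edm p D))"

text \<open>The permutation is
  encoded by a bijection f from the index type onto positions {0..<n}.\<close>
definition reducible :: "real ^ 'n ^ 'n \<Rightarrow> bool" where
  "reducible A \<longleftrightarrow>
     (CARD('n::finite) = 1 \<and> A = 0) \<or>
     (CARD('n) \<ge> 2 \<and> (\<exists>f :: 'n \<Rightarrow> nat. \<exists>k. bij_betw f UNIV {0..<CARD('n)} \<and> 0 < k \<and> k < CARD('n) \<and>
        (\<forall>i j. k \<le> f i \<and> f j < k \<longrightarrow> A $ i $ j = 0)))"

definition irreducible_mat :: "real ^ 'n ^ 'n \<Rightarrow> bool" where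
  "irreducible_mat A \<longleftrightarrow> \<not> reducible A"

definition allones_mat :: "real ^ 'n ^ 'n" ("E\<^sub>m") where
  "allones_mat = (\<chi> i j. 1)"

end

theory Submission
  imports Defs
begin

lemma sum_split_compl:
  fixes f :: "'n::finite \<Rightarrow> 'a::comm_monoid_add"
  shows "sum f UNIV = sum f P + sum f (-P)"
proof -
  have "P \<union> -P = UNIV" by auto
  then show ?thesis using sum.union_disjoint[of P "-P" f] by auto
qed

lemma obtuse_dep:
  fixes u :: "'n::finite \<Rightarrow> 'a::real_inner"
  assumes obt: "\<forall>i j. i \<noteq> j \<longrightarrow> inner (u i) (u j) \<le> 0"
    and conn: "\<forall>S. S \<noteq> {} \<and> S \<noteq> UNIV \<longrightarrow> (\<exists>i j. i \<notin> S \<and> j \<in> S \<and> inner (u i) (u j) \<noteq> 0)"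
    and dep: "(\<Sum>i\<in>UNIV. a i *\<^sub>R u i) = 0"
  shows "{i. a i > 0} = {} \<or> {i. a i > 0} = UNIV"
proof (rule ccontr)
  define P where "P = {i. a i > 0}"
  assume "\<not> ?thesis"
  then have P1: "P \<noteq> {}" "P \<noteq> UNIV" unfolding P_def by auto
  define vp where "vp = (\<Sum>i\<in>P. a i *\<^sub>R u i)"
  define vn where "vn = (\<Sum>i\<in>-P. (- a i) *\<^sub>R u i)"
  have "(\<Sum>i\<in>UNIV. a i *\<^sub>R u i) = vp - vn"
    unfolding vp_def vn_def sum_split_compl[of _ P] by (simp add: sum_negf)
  then have eq: "vp = vn" using dep by simp
  have "inner vp vn = (\<Sum>j\<in>-P. \<Sum>i\<in>P. a i * (- a j) * inner (u i) (u j))"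
    unfolding vp_def vn_def by (simp add: inner_sum_left inner_sum_right sum_distrib_left mult.assoc sum_negf mult.left_commute)
  also have "\<dots> \<le> 0"
  proof (intro sum_nonpos)
    fix i j assume "i \<in> P" "j \<in> -P"
    then have "a i > 0" "- a j \<ge> 0" "i \<noteq> j" unfolding P_def by auto
    then have "inner (u i) (u j) \<le> 0" "a i * (- a j) \<ge> 0" using obt by (auto simp: mult_nonneg_nonpos mult_nonpos_nonneg)
    then show "a i * (- a j) * inner (u i) (u j) \<le> 0"
      by (rule mult_nonneg_nonpos[rotated])
  qed
  finally have "inner vp vp \<le> 0" using eq by simp
  then have vp0: "vp = 0" by (metis inner_eq_zero_iff inner_ge_zero order_antisym)
  obtain k j where kj: "k \<notin> P" "j \<in> P" "inner (u k) (u j) \<noteq> 0" using conn P1 by blast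
  have "inner (u k) vp = (\<Sum>i\<in>P. a i * inner (u k) (u i))"
    unfolding vp_def by (simp add: inner_sum_right)
  also have "\<dots> < (\<Sum>i\<in>P. 0)"
  proof (rule sum_strict_mono_ex1)
    show "\<forall>i\<in>P. a i * inner (u k) (u i) \<le> 0"
    proof
      fix i assume "i \<in> P"
      then have "a i > 0" "k \<noteq> i" using kj unfolding P_def by auto
      then show "a i * inner (u k) (u i) \<le> 0" using obt by (simp add: mult_nonneg_nonpos)
    qed
    have "a j > 0" "k \<noteq> j" using kj unfolding P_def by auto
    then have "a j * inner (u k) (u j) < 0" using obt kj(3)
      by (metis mult_pos_neg order_le_imp_less_or_eq)
    then show "\<exists>i\<in>P. a i * inner (u k) (u i) < 0" using kj by blast
  qed simp
  finally show False using vp0 by simp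
qed

lemma obtuse_pos:
  fixes u :: "'n::finite \<Rightarrow> 'a::real_inner"
  assumes obt: "\<forall>i j. i \<noteq> j \<longrightarrow> inner (u i) (u j) \<le> 0"
    and eqs: "\<forall>k. inner (u k) (\<Sum>i\<in>UNIV. w i *\<^sub>R u i) = \<beta>"
    and bpos: "\<beta> > 0"
  shows "w i > 0"
proof -
  define N where "N = {i. w i < 0}"
  define v where "v = (\<Sum>i\<in>UNIV. w i *\<^sub>R u i)"
  define vn where "vn = (\<Sum>i\<in>N. (- w i) *\<^sub>R u i)"
  define vp where "vp = (\<Sum>i\<in>-N. w i *\<^sub>R u i)"
  have vsplit: "v = vp - vn"
    unfolding v_def vp_def vn_def sum_split_compl[of _ N] by (simp add: sum_negf)
  have "inner vn vp = (\<Sum>j\<in>-N. \<Sum>i\<in>N. (- w i) * w j * inner (u i) (u j))"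
    unfolding vp_def vn_def by (simp add: inner_sum_left inner_sum_right sum_distrib_left mult.assoc sum_negf mult.left_commute)
  also have "\<dots> \<le> 0"
  proof (intro sum_nonpos)
    fix i j assume "i \<in> N" "j \<in> -N"
    then have "- w i \<ge> 0" "w j \<ge> 0" "i \<noteq> j" unfolding N_def by auto
    then have "inner (u i) (u j) \<le> 0" "(- w i) * w j \<ge> 0" using obt by (auto simp: mult_nonneg_nonpos mult_nonpos_nonneg)
    then show "(- w i) * w j * inner (u i) (u j) \<le> 0"
      by (rule mult_nonneg_nonpos[rotated])
  qed
  finally have a: "inner vn vp \<le> 0" .
  have "inner vn v = (\<Sum>i\<in>N. (- w i) * \<beta>)"
    unfolding vn_def using eqs unfolding v_def by (simp add: inner_sum_left)
  moreover have "inner vn v = inner vn vp - inner vn vn" using vsplit by (simp add: inner_diff_right)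
  ultimately have "(\<Sum>i\<in>N. (- w i) * \<beta>) \<le> 0" using a inner_ge_zero[of vn] by linarith
  moreover have "N \<noteq> {} \<Longrightarrow> (\<Sum>i\<in>N. (- w i) * \<beta>) > 0"
    by (rule sum_pos) (use bpos in \<open>auto simp: N_def mult_neg_pos\<close>)
  ultimately have "N = {}" by linarith
  then have wnn: "\<forall>i. w i \<ge> 0" unfolding N_def by (auto simp: not_less)
  show "w i > 0"
  proof (rule ccontr)
    assume "\<not> w i > 0"
    then have wi: "w i = 0" using wnn[rule_format, of i] by linarith
    have "\<beta> = (\<Sum>j\<in>UNIV. w j * inner (u i) (u j))"
      using eqs by (simp add: inner_sum_right)
    also have "\<dots> \<le> 0"
    proof (intro sum_nonpos)
      fix j show "w j * inner (u i) (u j) \<le> 0"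
        using wi wnn obt by (cases "i = j") (auto simp: mult_nonneg_nonpos)
    qed
    finally show False using bpos by simp
  qed
qed

lemma edm_quad:
  fixes q :: "'n::finite \<Rightarrow> real ^ 'n"
  assumes "realizes_edm q D" "sum a UNIV = 0"
  shows "(\<Sum>i\<in>UNIV. \<Sum>j\<in>UNIV. a i * a j * D $ i $ j) = -2 * (norm (\<Sum>i\<in>UNIV. a i *\<^sub>R q i))\<^sup>2"
proof -
  have d: "D $ i $ j = inner (q i) (q i) + inner (q j) (q j) - 2 * inner (q i) (q j)" for i j
    using assms(1) unfolding realizes_edm_def power2_norm_eq_inner
    by (simp add: inner_diff_left inner_diff_right inner_commute)
  have n0: "(norm (\<Sum>i\<in>UNIV. a i *\<^sub>R q i))\<^sup>2 = (\<Sum>j\<in>UNIV. \<Sum>i\<in>UNIV. a j * a i * inner (q i) (q j))"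
    unfolding power2_norm_eq_inner by (simp add: inner_sum_left inner_sum_right sum_distrib_left mult.assoc)
  have n: "(norm (\<Sum>i\<in>UNIV. a i *\<^sub>R q i))\<^sup>2 = (\<Sum>i\<in>UNIV. \<Sum>j\<in>UNIV. a i * a j * inner (q i) (q j))"
    unfolding n0 by (simp add: inner_commute)
  have s1: "(\<Sum>i\<in>UNIV. \<Sum>j\<in>UNIV. a i * a j * inner (q i) (q i)) = 0"
    using assms(2) by (simp add: sum_distrib_right[symmetric] sum_distrib_left[symmetric] mult.commute mult.left_commute)
  have s2: "(\<Sum>i\<in>UNIV. \<Sum>j\<in>UNIV. a i * a j * inner (q j) (q j)) = 0"
    using assms(2) by (subst sum.swap) (simp add: sum_distrib_right[symmetric] sum_distrib_left[symmetric] mult.commute mult.left_commute)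
  have "(\<Sum>i\<in>UNIV. \<Sum>j\<in>UNIV. a i * a j * D $ i $ j) =
     (\<Sum>i\<in>UNIV. \<Sum>j\<in>UNIV. a i * a j * inner (q i) (q i)) + (\<Sum>i\<in>UNIV. \<Sum>j\<in>UNIV. a i * a j * inner (q j) (q j))
     - 2 * (\<Sum>i\<in>UNIV. \<Sum>j\<in>UNIV. a i * a j * inner (q i) (q j))"
    unfolding d by (simp add: algebra_simps sum.distrib sum_subtractf sum_distrib_left)
  then show ?thesis using s1 s2 n by simp
qed
lemma irred_conn:
  fixes A :: "real ^ 'n ^ 'n"
  assumes "irreducible_mat A" "CARD('n) \<ge> 2" "S \<noteq> {}" "S \<noteq> UNIV"
  shows "\<exists>i j. i \<notin> S \<and> j \<in> S \<and> A $ i $ j \<noteq> 0"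
proof (rule ccontr)
  assume nc: "\<not> ?thesis"
  obtain h where h: "bij_betw h S {0..<card S}" using ex_bij_betw_finite_nat[of S] by auto
  obtain g where g: "bij_betw g (-S) {0..<card (-S)}" using ex_bij_betw_finite_nat[of "-S"] by auto
  have cs: "card S + card (-S) = CARD('n)"
  proof -
    have "S \<union> -S = UNIV" by auto
    then show ?thesis using card_Un_disjoint[of S "-S"] by auto
  qed
  have sh: "bij_betw (\<lambda>x. card S + x) {0..<card (-S)} {card S..<CARD('n)}"
  proof -
    have "plus (card S) ` {0..<card (-S)} = {card S..<CARD('n)}"
      using cs by (simp add: add.commute)
    then show ?thesis unfolding bij_betw_def by (simp add: inj_on_def)
  qed
  have g2: "bij_betw (\<lambda>i. card S + g i) (-S) {card S..<CARD('n)}"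
    using bij_betw_trans[OF g sh] by (simp add: o_def)
  define f where "f = (\<lambda>i. if i \<in> S then h i else card S + g i)"
  have fb: "bij_betw f (S \<union> -S) ({0..<card S} \<union> {card S..<CARD('n)})"
    unfolding f_def by (rule bij_betw_disjoint_Un[OF h g2]) auto
  have fb': "bij_betw f UNIV {0..<CARD('n)}"
    proof -
    have "S \<union> -S = UNIV" by auto
    moreover have "{0..<card S} \<union> {card S..<CARD('n)} = {0..<CARD('n)}" using cs by auto
    ultimately show ?thesis using fb by simp
  qed
  have k0: "0 < card S" using assms(3) by (simp add: card_gt_0_iff)
  have k1: "card S < CARD('n)" proof -
    have "-S \<noteq> {}" using assms(4) by auto
    then have "card (-S) > 0" by (simp add: card_gt_0_iff)
    then show ?thesis using cs by linarith
  qed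
  have fS: "f i < card S \<longleftrightarrow> i \<in> S" for i
    using h g2 unfolding f_def bij_betw_def by auto
  have "reducible A"
    unfolding reducible_def using assms(2) fb' k0 k1 nc fS
    by (metis not_less)
  then show False using assms(1) unfolding irreducible_mat_def by simp
qed

lemma zero_only:
  fixes u :: "'n::finite \<Rightarrow> 'a::real_inner"
  assumes obt: "\<forall>i j. i \<noteq> j \<longrightarrow> inner (u i) (u j) \<le> 0"
    and conn: "\<forall>S. S \<noteq> {} \<and> S \<noteq> UNIV \<longrightarrow> (\<exists>i j. i \<notin> S \<and> j \<in> S \<and> inner (u i) (u j) \<noteq> 0)"
    and dep: "(\<Sum>i\<in>UNIV. a i *\<^sub>R u i) = 0"
    and s0: "sum a UNIV = 0"
  shows "a i = 0"
proof -
  have dep': "(\<Sum>i\<in>UNIV. (- a i) *\<^sub>R u i) = 0" using dep by (simp add: sum_negf)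
  have A: "{i. a i > 0} = {} \<or> {i. a i > 0} = UNIV" by (rule obtuse_dep[OF obt conn dep])
  have B: "{i. - a i > 0} = {} \<or> {i. - a i > 0} = UNIV" by (rule obtuse_dep[OF obt conn dep'])
  have "{i. a i > 0} \<noteq> UNIV"
  proof
    assume "{i. a i > 0} = UNIV"
    then have "sum a UNIV > 0" by (intro sum_pos) auto
    then show False using s0 by simp
  qed
  moreover have "{i. - a i > 0} \<noteq> UNIV"
  proof
    assume "{i. - a i > 0} = UNIV"
    then have "sum (\<lambda>i. - a i) UNIV > 0" by (intro sum_pos) auto
    then show False using s0 by (simp add: sum_negf)
  qed
  ultimately have "{i. a i > 0} = {}" "{i. - a i > 0} = {}" using A B by auto
  then show ?thesis by (metis (mono_tags, lifting) empty_Collect_eq neg_0_less_iff_less linorder_neqE_linordered_idom)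
qed

theorem lemma4p3:
  fixes D \<Delta> :: "real ^ 'n ^ 'n" and w :: "real ^ 'n" and r :: int
  assumes "CARD('n) \<ge> 2"
    and "is_unit_spherical_edm D"
    and "edm_embedding_dim D = r"
    and "\<forall>i j. i \<noteq> j \<longrightarrow> D $ i $ j \<ge> 2"
    and "D = 2 *\<^sub>R (E\<^sub>m - mat 1) + 2 *\<^sub>R \<Delta>"
    and "D *v w = (\<chi> i. 1)"
    and "irreducible_mat \<Delta>"
  shows "r = int CARD('n) - 1 \<and> (\<forall>i. w $ i > 0)"
proof -
  obtain p :: "'n \<Rightarrow> real ^ 'n" and c where real: "realizes_edm p D" and sph: "\<forall>i. dist c (p i) = 1"
    using assms(2) unfolding is_unit_spherical_edm_def by blast
  define u where "u i = p i - c" for i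
  have un: "inner (u i) (u i) = 1" for i
    using sph unfolding u_def by (simp add: dist_norm norm_minus_commute norm_eq_1[symmetric])
  have ru: "realizes_edm u D" using real unfolding realizes_edm_def u_def by simp
  have Dij: "D $ i $ j = 2 - 2 * inner (u i) (u j)" for i j
    using ru un[of i] un[of j] unfolding realizes_edm_def power2_norm_eq_inner
    by (simp add: inner_diff_left inner_diff_right inner_commute)
  have obt: "\<forall>i j. i \<noteq> j \<longrightarrow> inner (u i) (u j) \<le> 0"
    using assms(4) Dij by fastforce
  have Del: "\<Delta> $ i $ j = - inner (u i) (u j)" if "i \<noteq> j" for i j
  proof -
    have "D $ i $ j = 2 * (1 - (if i = j then 1 else 0)) + 2 * \<Delta> $ i $ j"
      using assms(5) by (simp add: allones_mat_def mat_def)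
    then show ?thesis using that Dij[of i j] by simp
  qed
  have conn: "\<forall>S. S \<noteq> {} \<and> S \<noteq> UNIV \<longrightarrow> (\<exists>i j. i \<notin> S \<and> j \<in> S \<and> inner (u i) (u j) \<noteq> 0)"
  proof (intro allI impI)
    fix S :: "'n set" assume "S \<noteq> {} \<and> S \<noteq> UNIV"
    then obtain i j where "i \<notin> S" "j \<in> S" "\<Delta> $ i $ j \<noteq> 0"
      using irred_conn[OF assms(7) assms(1)] by blast
    moreover then have "i \<noteq> j" by auto
    ultimately show "\<exists>i j. i \<notin> S \<and> j \<in> S \<and> inner (u i) (u j) \<noteq> 0" using Del by fastforce
  qed
  define q where "q = (SOME q :: 'n \<Rightarrow> real ^ 'n. realizes_edm q D)"
  have rq: "realizes_edm q D" unfolding q_def by (rule someI[where P="\<lambda>q. realizes_edm q D", OF real])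
  have rdef: "r = aff_dim (range q)" using assms(3) unfolding edm_embedding_dim_def q_def by simp
  have injq: "inj q"
  proof (rule injI)
    fix i j assume "q i = q j"
    then have "D $ i $ j = 0" using rq unfolding realizes_edm_def by simp
    then show "i = j" using assms(4) by fastforce
  qed
  have indep: "\<not> affine_dependent (range q)"
  proof
    assume "affine_dependent (range q)"
    then obtain U where U: "sum U (range q) = 0" "\<exists>v\<in>range q. U v \<noteq> 0"
        "(\<Sum>v\<in>range q. U v *\<^sub>R v) = 0"
      using affine_dependent_explicit_finite[of "range q"] by auto
    define a where "a i = U (q i)" for i
    have sa: "sum a UNIV = 0" using U(1) sum.reindex[OF injq, of U] unfolding a_def by (simp add: o_def)
    have va: "(\<Sum>i\<in>UNIV. a i *\<^sub>R q i) = 0"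
      using U(3) sum.reindex[OF injq, of "\<lambda>v. U v *\<^sub>R v"] unfolding a_def by (simp add: o_def)
    have "-2 * (norm (\<Sum>i\<in>UNIV. a i *\<^sub>R u i))\<^sup>2 = -2 * (norm (\<Sum>i\<in>UNIV. a i *\<^sub>R q i))\<^sup>2"
      using edm_quad[OF ru sa] edm_quad[OF rq sa] by simp
    then have "(\<Sum>i\<in>UNIV. a i *\<^sub>R u i) = 0" using va by simp
    then have "a i = 0" for i by (rule zero_only[OF obt conn _ sa])
    then show False using U(2) unfolding a_def by auto
  qed
  have "of_nat (card (range q)) = aff_dim (range q) + 1"
    by (rule aff_dim_affine_independent[OF indep])
  moreover have "card (range q) = CARD('n)" using injq by (simp add: card_image)
  ultimately have part1: "r = int CARD('n) - 1" using rdef by simp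
  define wf where "wf i = w $ i" for i
  define \<sigma> where "\<sigma> = sum wf UNIV"
  define v where "v = (\<Sum>i\<in>UNIV. wf i *\<^sub>R u i)"
  define \<beta> where "\<beta> = \<sigma> - 1/2"
  have row: "inner (u k) v = \<beta>" for k
  proof -
    have "1 = (D *v w) $ k" using assms(6) by simp
    also have "\<dots> = (\<Sum>j\<in>UNIV. (2 - 2 * inner (u k) (u j)) * wf j)"
      by (simp add: matrix_vector_mult_def Dij wf_def)
    also have "\<dots> = (\<Sum>j\<in>UNIV. 2 * wf j - 2 * (wf j * inner (u k) (u j)))"
      by (simp add: algebra_simps)
    also have "\<dots> = 2 * \<sigma> - 2 * (\<Sum>j\<in>UNIV. wf j * inner (u k) (u j))"
      by (simp add: sum_subtractf sum_distrib_left \<sigma>_def)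
    also have "\<dots> = 2 * \<sigma> - 2 * inner (u k) v"
      by (simp add: v_def inner_sum_right)
    finally show ?thesis unfolding \<beta>_def by simp
  qed
  have vv: "inner v v = \<beta> * \<sigma>"
  proof -
    have "inner v v = (\<Sum>k\<in>UNIV. wf k * inner (u k) v)"
      by (simp add: v_def[of] inner_sum_left)
    also have "\<dots> = \<beta> * \<sigma>" by (simp add: row \<sigma>_def sum_distrib_left mult.commute)
    finally show ?thesis .
  qed
  have part2: "wf i > 0" for i
  proof (cases "\<beta> > 0")
    case True
    then show ?thesis using obtuse_pos[OF obt _ True, of wf] row unfolding v_def by blast
  next
    case False
    show ?thesis
    proof (cases "\<beta> = 0")
      case True
      then have "v = 0" using vv by simp
      then have A: "{i. wf i > 0} = {} \<or> {i. wf i > 0} = UNIV"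
        using obtuse_dep[OF obt conn, of wf] unfolding v_def by blast
      have s: "\<sigma> = 1/2" using True unfolding \<beta>_def by simp
      have "{i. wf i > 0} \<noteq> {}"
      proof
        assume "{i. wf i > 0} = {}"
        then have "\<sigma> \<le> 0" unfolding \<sigma>_def by (intro sum_nonpos) (auto simp: not_less)
        then show False using s by simp
      qed
      then show ?thesis using A by auto
    next
      case False2: False
      then have bneg: "\<beta> < 0" using False by simp
      have "inner (u k) (\<Sum>i\<in>UNIV. (- wf i) *\<^sub>R u i) = - \<beta>" for k
        using row[of k] unfolding v_def by (simp add: sum_negf)
      then have neg: "- wf i > 0" for i using obtuse_pos[OF obt, of "\<lambda>i. - wf i" "- \<beta>"] bneg by auto
      have sneg: "\<sigma> < 0"
      proof -
        have "sum (\<lambda>i. - wf i) UNIV > 0" by (intro sum_pos) (use neg in auto)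
        then show ?thesis unfolding \<sigma>_def by (simp add: sum_negf)
      qed
      have "inner v v = (\<Sum>i\<in>UNIV. \<Sum>j\<in>UNIV. wf i * wf j * inner (u i) (u j))"
      proof -
        have "inner v v = (\<Sum>j\<in>UNIV. \<Sum>i\<in>UNIV. wf j * wf i * inner (u i) (u j))"
          unfolding v_def by (simp add: inner_sum_left inner_sum_right sum_distrib_left mult.assoc)
        also have "\<dots> = (\<Sum>i\<in>UNIV. \<Sum>j\<in>UNIV. wf i * wf j * inner (u i) (u j))"
          by (simp add: inner_commute)
        finally show ?thesis .
      qed
      also have "\<dots> \<le> (\<Sum>i\<in>UNIV. \<Sum>j\<in>UNIV. wf i * wf j)"
      proof (intro sum_mono)
        fix i j
        have p: "wf i * wf j \<ge> 0" using neg[of i] neg[of j] by (simp add: mult_nonpos_nonpos)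
        have "inner (u i) (u j) \<le> 1" using un[of i] obt by (cases "i = j") (auto, fastforce)
        then show "wf i * wf j * inner (u i) (u j) \<le> wf i * wf j"
          using mult_left_mono[OF _ p, of "inner (u i) (u j)" 1] by simp
      qed
      also have "\<dots> = \<sigma> * \<sigma>" unfolding \<sigma>_def by (simp add: sum_product)
      finally have "\<beta> * \<sigma> \<le> \<sigma> * \<sigma>" using vv by simp
      then have "\<beta> \<ge> \<sigma>" using sneg by (simp add: mult_le_cancel_right)
      then show ?thesis unfolding \<beta>_def by simp
    qed
  qed
  show ?thesis using part1 part2 unfolding wf_def by simp
qed

end
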